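(* Let $C_0,\beta_h,\gamma_h,\beta_v,\gamma_v>0$ be constants and consider the ODE \[\frac{di_h}{dt}=\frac{C_0\beta_h\beta_v\, i_h(1-i_h)}{\beta_v i_h+\gamma_v}-\gamma_h i_h ,\qquad i_h(0)\in[0,1].\] Let $\mathcal{R}_0=\sqrt{\frac{\beta_h}{\gamma_v}\cdot\frac{C_0\beta_v}{\gamma_h}}$. The ODE has two equilibrium points \[E^f=0\quad\text{and}\quad E^e=\frac{C_0\beta_h\beta_v-\gamma_h\gamma_v}{C_0\beta_h\beta_v+\beta_v\gamma_h},\] and (i) $E^f$ is globally asymptotically stable when $\mathcal{R}_0\le 1$, globally exponentially stable when $\mathcal{R}_0<1$, and unstable when $\mathcal{R}_0>1$; (ii) when $\mathcal{R}_0>1$, $E^e$ is locally asymptotically stable, and it is globally asymptotically stable when $i_h(0)\in(0,1]$.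
   Context: For an ODE $y'=f(y)$ with equilibrium $y_0$ ($f(y_0)=0$): $y_0$ is stable if for every $\epsilon>0$ there is $\delta>0$ such that $|y(0)-y_0|<\delta$ implies $|y(t)-y_0|<\epsilon$ for all $t>0$; locally asymptotically stable if there is $a>0$ such that $|y(0)-y_0|\le a$ implies $y(t)\to y_0$; globally asymptotically stable if $y(t)\to y_0$ as $t\to\infty$ (for all considered initial values); globally exponentially stable if it is globally asymptotically stable and there are $M,\kappa>0$ with $|y(t)-y_0|\le Me^{-\kappa t}$; unstable if not stable. *)

theory Defs
  imports "HOL-Analysis.Analysis"
begin

definition ode_sol :: "(real \<Rightarrow> real) \<Rightarrow> (real \<Rightarrow> real) \<Rightarrow> bool" where
  "ode_sol f y \<longleftrightarrow> (\<forall>t\<ge>0. (y has_real_derivative f (y t)) (at t within {0..}))"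

definition stable_eq :: "(real \<Rightarrow> real) \<Rightarrow> real set \<Rightarrow> real \<Rightarrow> bool" where
  "stable_eq f S e \<longleftrightarrow>
     (\<forall>\<epsilon>>0. \<exists>\<delta>>0. \<forall>y. ode_sol f y \<and> y 0 \<in> S \<and> \<bar>y 0 - e\<bar> < \<delta> \<longrightarrow>
        (\<forall>t>0. \<bar>y t - e\<bar> < \<epsilon>))"

definition loc_asym_stable :: "(real \<Rightarrow> real) \<Rightarrow> real set \<Rightarrow> real \<Rightarrow> bool" where
  "loc_asym_stable f S e \<longleftrightarrow>
     (\<exists>a>0. \<forall>y. ode_sol f y \<and> y 0 \<in> S \<and> \<bar>y 0 - e\<bar> \<le> a \<longrightarrow> (y \<longlongrightarrow> e) at_top)"

definition glob_asym_stable :: "(real \<Rightarrow> real) \<Rightarrow> real set \<Rightarrow> real \<Rightarrow> bool" where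
  "glob_asym_stable f S e \<longleftrightarrow>
     (\<forall>y. ode_sol f y \<and> y 0 \<in> S \<longrightarrow> (y \<longlongrightarrow> e) at_top)"

definition glob_exp_stable :: "(real \<Rightarrow> real) \<Rightarrow> real set \<Rightarrow> real \<Rightarrow> bool" where
  "glob_exp_stable f S e \<longleftrightarrow> glob_asym_stable f S e \<and>
     (\<exists>M>0. \<exists>\<kappa>>0. \<forall>y. ode_sol f y \<and> y 0 \<in> S \<longrightarrow>
        (\<forall>t\<ge>0. \<bar>y t - e\<bar> \<le> M * exp (- \<kappa> * t)))"

definition unstable_eq :: "(real \<Rightarrow> real) \<Rightarrow> real set \<Rightarrow> real \<Rightarrow> bool" where
  "unstable_eq f S e \<longleftrightarrow> \<not> stable_eq f S e"

end

theory Submission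
  imports Defs "HOL-Real_Asymp.Real_Asymp"
begin

lemma dec_lemma:
  fixes h H :: "real \<Rightarrow> real"
  assumes d: "\<And>u. u \<ge> 0 \<Longrightarrow> (h has_real_derivative H u) (at u within {0..})"
    and st: "0 \<le> s" "s \<le> t" and neg: "\<And>u. s < u \<Longrightarrow> u < t \<Longrightarrow> H u \<le> 0"
  shows "h t \<le> h s"
proof (rule DERIV_nonpos_imp_decreasing_open[OF st(2)])
  fix x assume x: "s < x" "x < t"
  have x0: "x \<ge> 0" using x st by simp
  have "(h has_real_derivative H x) (at x within {0<..})"
    by (rule DERIV_subset[OF d[OF x0]]) auto
  moreover have "at x within {0<..} = at x"
    by (rule at_within_open) (use x st in auto)
  ultimately have "(h has_real_derivative H x) (at x)" by simp
  thus "\<exists>y. (h has_real_derivative y) (at x) \<and> y \<le> 0" using neg x by blast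
next
  have "continuous_on {0..} h"
    unfolding continuous_on_eq_continuous_within
    using d DERIV_continuous by (metis atLeast_iff)
  thus "continuous_on {s..t} h" by (rule continuous_on_subset) (use st in auto)
qed
lemma trap_lemma:
  fixes y :: "real \<Rightarrow> real"
  assumes cont: "continuous_on {0..} y" and y0: "y 0 \<in> {\<alpha>..\<beta>}"
    and step: "\<And>t. t \<ge> 0 \<Longrightarrow> (\<forall>u\<in>{0..t}. y u \<in> {\<alpha>..\<beta>}) \<Longrightarrow> y t \<in> {\<alpha><..<\<beta>}"
  shows "\<forall>t\<ge>0. y t \<in> {\<alpha>..\<beta>}"
proof (rule ccontr)
  assume "\<not> ?thesis"
  then obtain t1 where t1: "t1 \<ge> 0" "y t1 \<notin> {\<alpha>..\<beta>}" by blast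
  define C where "C = {0..t1} \<inter> y -` (- {\<alpha><..<\<beta>})"
  have cc: "continuous_on {0..t1} y" by (rule continuous_on_subset[OF cont]) auto
  have clC: "closed C" unfolding C_def
    by (rule continuous_closed_preimage[OF cc]) (auto intro: closed_Compl)
  have neC: "C \<noteq> {}" using t1 unfolding C_def by auto
  have bC: "bdd_below C" unfolding C_def by (rule bdd_belowI[of _ 0]) auto
  define m where "m = Inf C"
  have mC: "m \<in> C" unfolding m_def using closed_contains_Inf[OF neC bC clC] .
  have m0: "0 \<le> m" "m \<le> t1" using mC unfolding C_def by auto
  have below: "y u \<in> {\<alpha><..<\<beta>}" if "0 \<le> u" "u < m" for u
  proof (rule ccontr)
    assume "y u \<notin> {\<alpha><..<\<beta>}"
    hence "u \<in> C" using that m0 unfolding C_def by auto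
    hence "m \<le> u" unfolding m_def using bC by (rule cInf_lower)
    with that show False by simp
  qed
  have allK: "\<forall>u\<in>{0..m}. y u \<in> {\<alpha>..\<beta>}"
  proof (cases "m = 0")
    case True thus ?thesis using y0 by auto
  next
    case False
    hence mpos: "0 < m" using m0 by simp
    define C' where "C' = {0..m} \<inter> y -` {\<alpha>..\<beta>}"
    have cc': "continuous_on {0..m} y" by (rule continuous_on_subset[OF cont]) auto
    have "closed C'" unfolding C'_def by (rule continuous_closed_preimage[OF cc']) auto
    moreover have "{0..<m} \<subseteq> C'" unfolding C'_def using below by fastforce
    ultimately have "closure {0..<m} \<subseteq> C'" by (rule closure_minimal[rotated])
    hence "{0..m} \<subseteq> C'" using closure_atLeastLessThan[OF mpos] by simp
    thus ?thesis unfolding C'_def by blast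
  qed
  have "y m \<in> {\<alpha><..<\<beta>}" using step[OF m0(1) allK] .
  with mC show False unfolding C_def by blast
qed


locale sis =
  fixes C0 bh gh bv gv :: real
  assumes pos: "C0 > 0" "bh > 0" "gh > 0" "bv > 0" "gv > 0"
begin

definition F where "F x = C0 * bh * bv * x * (1 - x) / (bv * x + gv) - gh * x"
definition "A = C0*bh*bv"
definition "a = A - gh*gv"
definition "b = A + bv*gh"
definition "E = a/b"
definition "c = gv/(2*bv)"
definition "L = (\<bar>a\<bar> + b*(c+2))*2/gv"
definition "gg x = b*(E-x)/(bv*x+gv)"

lemma A_pos: "A > 0" using pos by (simp add: A_def)
lemma b_pos: "b > 0" using A_pos pos by (simp add: b_def add_pos_pos)
lemma c_pos: "c > 0" using pos by (simp add: c_def)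
lemma a_lt_b: "a < b" using pos by (simp add: a_def b_def) (smt (verit) mult_pos_pos)
lemma E_lt1: "E < 1" using a_lt_b b_pos by (simp add: E_def)
lemma bE: "b*E = a" using b_pos by (simp add: E_def)
lemma L_nonneg: "L \<ge> 0" using pos b_pos c_pos unfolding L_def by simp

lemma F_eq: assumes "bv*x+gv \<noteq> 0" shows "F x = x * gg x"
proof -
  have "F x = (C0*bh*bv*x*(1-x) - gh*x*(bv*x+gv))/(bv*x+gv)"
    using assms by (simp add: F_def field_simps)
  also have "C0*bh*bv*x*(1-x) - gh*x*(bv*x+gv) = x*(a - b*x)"
    by (simp add: a_def b_def A_def algebra_simps)
  also have "a - b*x = b*(E-x)" using bE by (simp add: algebra_simps)
  finally show ?thesis by (simp add: gg_def)
qed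

lemma D_bounds: assumes "x \<in> {-c..2}" shows "gv/2 \<le> bv*x+gv" "bv*x+gv \<le> 2*bv+gv"
proof -
  have "bv*x \<ge> bv*(-c)" using assms pos by (intro mult_left_mono) auto
  moreover have "bv*(-c) = -gv/2" using pos by (simp add: c_def)
  ultimately show "gv/2 \<le> bv*x+gv" by simp
  have "bv*x \<le> bv*2" using assms pos by (intro mult_left_mono) auto
  thus "bv*x+gv \<le> 2*bv+gv" by simp
qed

lemma gg_bound: assumes "x \<in> {-c..2}" shows "gg x \<le> L" "- L \<le> gg x"
proof -
  have D: "gv/2 \<le> bv*x+gv" using D_bounds[OF assms] by simp
  have "\<bar>x\<bar> \<le> c+2" using assms c_pos by auto
  have N: "\<bar>b*(E-x)\<bar> \<le> \<bar>a\<bar> + b*(c+2)"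
  proof -
    have "b*(E-x) = a - b*x" using bE by (simp add: algebra_simps)
    hence "\<bar>b*(E-x)\<bar> \<le> \<bar>a\<bar> + \<bar>b*x\<bar>" by simp
    also have "\<bar>b*x\<bar> = b*\<bar>x\<bar>" using b_pos by (simp add: abs_mult)
    also have "b*\<bar>x\<bar> \<le> b*(c+2)" using \<open>\<bar>x\<bar> \<le> c+2\<close> b_pos by (intro mult_left_mono) auto
    finally show ?thesis by simp
  qed
  have "\<bar>gg x\<bar> = \<bar>b*(E-x)\<bar>/(bv*x+gv)" using D pos by (simp add: gg_def abs_divide)
  also have "\<dots> \<le> (\<bar>a\<bar> + b*(c+2))/(gv/2)"
    using D N pos by (intro frac_le) auto
  also have "\<dots> = L" by (simp add: L_def)
  finally show "gg x \<le> L" "- L \<le> gg x" by auto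
qed

lemma equilibria: "F 0 = 0" "F E = 0" "F x = 0 \<Longrightarrow> x = 0 \<or> x = E"
proof -
  show "F 0 = 0" by (simp add: F_def)
  have "bv*E + gv = (bv*a + gv*b)/b" using b_pos by (simp add: E_def field_simps)
  also have "bv*a + gv*b = A*(bv+gv)" by (simp add: a_def b_def algebra_simps)
  finally have "bv*E + gv > 0" using A_pos b_pos pos by simp
  thus "F E = 0" by (simp add: F_eq gg_def)
  assume F0: "F x = 0"
  show "x = 0 \<or> x = E"
  proof (cases "bv*x+gv = 0")
    case True
    hence "x = -gv/bv" using pos by (simp add: field_simps)
    hence "x \<noteq> 0" using pos by simp
    moreover have "F x = - gh * x" using True by (simp add: F_def)
    ultimately show ?thesis using F0 pos by simp
  next
    case False
    hence "x * (b*(E-x)/(bv*x+gv)) = 0" using F0 F_eq[OF False] by (simp add: gg_def)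
    thus ?thesis using False b_pos by auto
  qed
qed


context
  fixes y assumes sol: "ode_sol F y"
begin

lemma yd: "t \<ge> 0 \<Longrightarrow> (y has_real_derivative F (y t)) (at t within {0..})"
  using sol unfolding ode_sol_def by auto

lemma ycont: "continuous_on {0..} y"
  unfolding continuous_on_eq_continuous_within
  using yd DERIV_continuous by (metis atLeast_iff)

lemma L1a: assumes t: "0 \<le> t" and K: "\<forall>u\<in>{0..t}. y u \<in> {-c..2}"
  shows "(y t)^2 \<le> (y 0)^2 * exp(2*L*t)"
proof -
  define h where "h u = (y u)^2 * exp(-2*L*u)" for u
  have hd: "(h has_real_derivative (2*y u*F(y u)*exp(-2*L*u) - 2*L*(y u)^2*exp(-2*L*u))) (at u within {0..})"
    if "u \<ge> 0" for u
    unfolding h_def by (auto intro!: derivative_eq_intros yd[OF that] simp: algebra_simps)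
  have "h t \<le> h 0"
  proof (rule dec_lemma[OF hd])
    fix u assume u: "0 < u" "u < t"
    have yK: "y u \<in> {-c..2}" using K u by auto
    have "bv * y u + gv \<noteq> 0" using D_bounds[OF yK] pos by auto
    hence "2*y u*F(y u) - 2*L*(y u)^2 = 2*(y u)^2*(gg (y u) - L)"
      by (simp add: F_eq power2_eq_square algebra_simps)
    also have "\<dots> \<le> 0" using gg_bound[OF yK] by (intro mult_nonneg_nonpos) auto
    finally have "2*y u*F(y u) - 2*L*(y u)^2 \<le> 0" .
    hence "(2*y u*F(y u) - 2*L*(y u)^2) * exp(-2*L*u) \<le> 0"
      by (intro mult_nonpos_nonneg) auto
    thus "2*y u*F(y u)*exp(-2*L*u) - 2*L*(y u)^2*exp(-2*L*u) \<le> 0" by (simp add: algebra_simps)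
  qed (use t in auto)
  hence "(y t)^2 * exp(-2*L*t) * exp(2*L*t) \<le> (y 0)^2 * exp(2*L*t)"
    unfolding h_def by (intro mult_right_mono) auto
  moreover have "exp(-2*L*t) * exp(2*L*t) = 1" by (simp add: exp_add[symmetric])
  ultimately show ?thesis by (metis mult.assoc mult.right_neutral)
qed

lemma L1b: assumes t: "0 \<le> t" and K: "\<forall>u\<in>{0..t}. y u \<in> {-c..2}"
  shows "(y 0)^2 \<le> (y t)^2 * exp(2*L*t)"
proof -
  define h where "h u = - ((y u)^2 * exp(2*L*u))" for u
  have hd: "(h has_real_derivative - (2*y u*F(y u)*exp(2*L*u) + 2*L*(y u)^2*exp(2*L*u))) (at u within {0..})"
    if "u \<ge> 0" for u
    unfolding h_def by (auto intro!: derivative_eq_intros yd[OF that] simp: algebra_simps)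
  have "h t \<le> h 0"
  proof (rule dec_lemma[OF hd])
    fix u assume u: "0 < u" "u < t"
    have yK: "y u \<in> {-c..2}" using K u by auto
    have "bv * y u + gv \<noteq> 0" using D_bounds[OF yK] pos by auto
    hence "2*y u*F(y u) + 2*L*(y u)^2 = 2*(y u)^2*(gg (y u) + L)"
      by (simp add: F_eq power2_eq_square algebra_simps)
    also have "\<dots> \<ge> 0" using gg_bound[OF yK] by (intro mult_nonneg_nonneg) auto
    finally have "2*y u*F(y u) + 2*L*(y u)^2 \<ge> 0" .
    hence "(2*y u*F(y u) + 2*L*(y u)^2) * exp(2*L*u) \<ge> 0"
      by (intro mult_nonneg_nonneg) auto
    thus "- (2*y u*F(y u)*exp(2*L*u) + 2*L*(y u)^2*exp(2*L*u)) \<le> 0" by (simp add: algebra_simps)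
  qed (use t in auto)
  thus ?thesis unfolding h_def by simp
qed

lemma L2zero: assumes t: "0 \<le> t" and K: "\<forall>u\<in>{0..t}. y u \<in> {-c..2}" and y0: "y 0 = 0"
  shows "y t = 0"
  using L1a[OF t K] y0 by simp

lemma L2pos: assumes t: "0 \<le> t" and K: "\<forall>u\<in>{0..t}. y u \<in> {-c..2}" and y0: "y 0 > 0"
  shows "y t > 0"
proof (rule ccontr)
  assume "\<not> y t > 0"
  hence "y t \<le> 0" by simp
  moreover have "continuous_on {0..t} y" by (rule continuous_on_subset[OF ycont]) auto
  ultimately obtain u where u: "0 \<le> u" "u \<le> t" "y u = 0"
    using IVT2'[of y t 0 0] y0 t by auto
  have "(y 0)^2 \<le> (y u)^2 * exp(2*L*u)" using L1b[OF u(1)] K u by auto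
  with u y0 show False by simp
qed

lemma L3: assumes st: "0 \<le> s" "s \<le> t" and P: "\<forall>u\<in>{s..t}. y u \<ge> 0"
  shows "(y t - E)^2 \<le> (y s - E)^2"
proof -
  define h where "h u = (y u - E)^2" for u
  have hd: "(h has_real_derivative (2*(y u - E)*F(y u))) (at u within {0..})"
    if "u \<ge> 0" for u
    unfolding h_def by (auto intro!: derivative_eq_intros yd[OF that] simp: algebra_simps)
  have "h t \<le> h s"
  proof (rule dec_lemma[OF hd])
    fix u assume u: "s < u" "u < t"
    have yp: "y u \<ge> 0" using P u by auto
    have Dp: "bv * y u + gv > 0" using yp pos by (smt (verit) mult_nonneg_nonneg)
    have "2*(y u - E)*F(y u) = - (2*b*y u*(y u - E)^2/(bv * y u + gv))"
      using Dp by (simp add: F_eq gg_def power2_eq_square field_simps)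
    also have "\<dots> \<le> 0" using Dp yp b_pos by simp
    finally show "2*(y u - E)*F(y u) \<le> 0" .
  qed (use st in auto)
  thus ?thesis unfolding h_def .
qed


lemma invariant: assumes y0: "y 0 \<in> {0..1}" shows "\<forall>t\<ge>0. y t \<in> {-c..2}"
proof (rule trap_lemma[OF ycont])
  show "y 0 \<in> {-c..2}" using y0 c_pos by auto
  fix t :: real assume t: "t \<ge> 0" and K: "\<forall>u\<in>{0..t}. y u \<in> {-c..2}"
  have nn: "\<forall>u\<in>{0..t}. y u \<ge> 0"
  proof
    fix u assume u: "u \<in> {0..t}"
    have Ku: "\<forall>v\<in>{0..u}. y v \<in> {-c..2}" using K u by auto
    show "y u \<ge> 0"
    proof (cases "y 0 = 0")
      case True thus ?thesis using L2zero[OF _ Ku] u by auto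
    next
      case False hence "y 0 > 0" using y0 by auto
      thus ?thesis using L2pos[OF _ Ku] u by fastforce
    qed
  qed
  have "(y t - E)^2 \<le> (y 0 - E)^2" using L3[of 0 t] t nn by auto
  hence "\<bar>y t - E\<bar> \<le> \<bar>y 0 - E\<bar>" by (simp add: abs_le_square_iff)
  hence "y t < 2" using E_lt1 y0 by (auto simp: abs_le_iff abs_if split: if_splits)
  moreover have "y t \<ge> 0" using nn t by auto
  ultimately show "y t \<in> {-c<..<2}" using c_pos by auto
qed

lemma inv_facts: assumes y0: "y 0 \<in> {0..1}" and t: "t \<ge> 0"
  shows "0 \<le> y t" "y t \<le> 2" "y 0 = 0 \<Longrightarrow> y t = 0" "y 0 > 0 \<Longrightarrow> y t > 0"
proof -
  have K: "\<forall>u\<in>{0..t}. y u \<in> {-c..2}" using invariant[OF y0] by auto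
  show z: "y 0 = 0 \<Longrightarrow> y t = 0" using L2zero[OF t K] .
  show p: "y 0 > 0 \<Longrightarrow> y t > 0" using L2pos[OF t K] .
  show "0 \<le> y t" using z p y0 by (cases "y 0 = 0") auto
  show "y t \<le> 2" using K t by auto
qed

lemma V_mono: assumes y0: "y 0 \<in> {0..1}" and st: "0 \<le> s" "s \<le> t"
  shows "(y t - E)^2 \<le> (y s - E)^2"
  using L3[OF st] inv_facts(1)[OF y0] st by auto

lemma decay_weak: assumes y0: "y 0 \<in> {0..1}" and a0: "a \<le> 0" and t: "t \<ge> 0"
  shows "y t \<le> 1/(1 + b/(2*bv+gv)*t)"
proof -
  define k where "k = b/(2*bv+gv)"
  have kpos: "k > 0" using b_pos pos by (simp add: k_def add_pos_pos)
  show ?thesis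
  proof (cases "y 0 = 0")
    case True thus ?thesis using inv_facts(3)[OF y0 t] kpos t by (simp add: k_def[symmetric])
  next
    case False
    hence y0p: "y 0 > 0" using y0 by auto
    have ypos: "y u > 0" if "u \<ge> 0" for u using inv_facts(4)[OF y0 that y0p] .
    define h where "h u = k*u - inverse (y u)" for u
    have hd: "(h has_real_derivative (k + F (y u) / (y u)^2)) (at u within {0..})"
      if "u \<ge> 0" for u
      unfolding h_def using ypos[OF that]
      by (auto intro!: derivative_eq_intros yd[OF that] simp: field_simps power2_eq_square)
    have "h t \<le> h 0"
    proof (rule dec_lemma[OF hd])
      fix u assume u: "0 < u" "u < t"
      have yp: "y u > 0" using ypos u by auto
      have y2: "y u \<le> 2" using inv_facts(2)[OF y0] u by auto
      have Dp: "bv * y u + gv > 0" using yp pos by (smt (verit) mult_nonneg_nonneg)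
      have Dle: "bv * y u + gv \<le> 2*bv+gv" using y2 pos by simp
      have E0: "E \<le> 0" using a0 b_pos by (simp add: E_def divide_nonpos_pos)
      have "F (y u) / (y u)^2 = (y u * gg (y u))/(y u * y u)"
        using Dp by (simp add: F_eq power2_eq_square)
      also have "\<dots> = gg (y u) / y u" using yp by simp
      also have "\<dots> = b*(E - y u)/(y u * (bv * y u + gv))"
        by (simp add: gg_def mult.commute)
      also have "\<dots> \<le> b*(- y u)/(y u * (bv * y u + gv))"
        using Dp yp b_pos E0 by (intro divide_right_mono mult_left_mono) auto
      also have "\<dots> = - (b/(bv * y u + gv))" using yp Dp by (simp add: divide_simps)
      also have "\<dots> \<le> - k" unfolding k_def using Dp Dle b_pos
        by (simp add: frac_le)
      finally show "k + F (y u) / (y u)^2 \<le> 0" by simp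
    qed (use t in auto)
    hence "k*t - inverse (y t) \<le> - inverse (y 0)" by (simp add: h_def)
    moreover have "inverse (y 0) \<ge> 1" using y0p y0 by (simp add: one_le_inverse_iff)
    ultimately have "1 + k*t \<le> inverse (y t)" by simp
    hence "y t * (1 + k*t) \<le> y t * inverse (y t)"
      using ypos[OF t] by (intro mult_left_mono) auto
    hence "y t * (1 + k*t) \<le> 1" using ypos[OF t] by simp
    hence "y t \<le> 1/(1 + k*t)" using kpos t by (simp add: le_divide_eq add_pos_nonneg)
    thus ?thesis by (simp add: k_def)
  qed
qed

lemma decay_exp: assumes y0: "y 0 \<in> {0..1}" and a0: "a < 0" and t: "t \<ge> 0"
  shows "y t \<le> exp (- (-a/(2*bv+gv)) * t)"
proof -
  define \<kappa> where "\<kappa> = -a/(2*bv+gv)"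
  define h where "h u = y u * exp (\<kappa>*u)" for u
  have hd: "(h has_real_derivative (F (y u) * exp(\<kappa>*u) + y u * (\<kappa> * exp(\<kappa>*u)))) (at u within {0..})"
    if "u \<ge> 0" for u
    unfolding h_def by (auto intro!: derivative_eq_intros yd[OF that] simp: algebra_simps)
  have "h t \<le> h 0"
  proof (rule dec_lemma[OF hd])
    fix u assume u: "0 < u" "u < t"
    have yp: "y u \<ge> 0" using inv_facts(1)[OF y0] u by auto
    have y2: "y u \<le> 2" using inv_facts(2)[OF y0] u by auto
    have Dp: "bv * y u + gv > 0" using yp pos by (smt (verit) mult_nonneg_nonneg)
    have Dle: "bv * y u + gv \<le> 2*bv+gv" using y2 pos by simp
    have "gg (y u) = a/(bv * y u + gv) - b * y u/(bv * y u + gv)"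
      using bE by (simp add: gg_def diff_divide_distrib algebra_simps)
    also have "\<dots> \<le> a/(bv * y u + gv)" using Dp yp b_pos by simp
    also have "\<dots> \<le> - \<kappa>"
    proof -
      have "(-a)/(2*bv+gv) \<le> (-a)/(bv * y u + gv)" using a0 Dp Dle by (intro frac_le) auto
      thus ?thesis by (simp add: \<kappa>_def)
    qed
    finally have g: "gg (y u) + \<kappa> \<le> 0" by simp
    have "F (y u) * exp(\<kappa>*u) + y u * (\<kappa> * exp(\<kappa>*u)) = y u * (gg (y u) + \<kappa>) * exp(\<kappa>*u)"
      using Dp by (simp add: F_eq algebra_simps)
    also have "\<dots> \<le> 0" using yp g by (intro mult_nonpos_nonneg mult_nonneg_nonpos) auto
    finally show "F (y u) * exp(\<kappa>*u) + y u * (\<kappa> * exp(\<kappa>*u)) \<le> 0" .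
  qed (use t in auto)
  hence h1: "y t * exp (\<kappa>*t) \<le> 1" using y0 by (simp add: h_def)
  have "y t * exp (\<kappa>*t) * exp (-\<kappa>*t) \<le> exp (-\<kappa>*t)"
    using mult_right_mono[OF h1, of "exp (-\<kappa>*t)"] by simp
  moreover have "exp (\<kappa>*t) * exp (-\<kappa>*t) = 1" by (simp add: exp_add[symmetric])
  ultimately show ?thesis unfolding \<kappa>_def by (metis mult.assoc mult.right_neutral)
qed


lemma lower: assumes y0: "y 0 \<in> {0<..1}" and apos: "a > 0" and t: "t \<ge> 0"
  shows "y t \<ge> min (y 0) E"
proof -
  have y01: "y 0 \<in> {0..1}" using y0 by auto
  show ?thesis
  proof (cases "y 0 \<le> E")
    case True
    have "(y t - E)^2 \<le> (y 0 - E)^2" using V_mono[OF y01 _ t] by simp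
    hence "\<bar>y t - E\<bar> \<le> \<bar>y 0 - E\<bar>" by (simp add: abs_le_square_iff)
    hence "y t \<ge> y 0" using True by (auto simp: abs_le_iff abs_if split: if_splits)
    thus ?thesis by simp
  next
    case False
    show ?thesis
    proof (rule ccontr)
      assume "\<not> ?thesis"
      hence lt: "y t < E" using False by simp
      have "continuous_on {0..t} y" by (rule continuous_on_subset[OF ycont]) auto
      then obtain s where s: "0 \<le> s" "s \<le> t" "y s = E"
        using IVT2'[of y t E 0] lt False t by auto
      have "(y t - E)^2 \<le> (y s - E)^2" using V_mono[OF y01 s(1,2)] .
      hence "y t = E" using s by simp
      with lt show False by simp
    qed
  qed
qed

lemma converge_E: assumes y0: "y 0 \<in> {0<..1}" and apos: "a > 0"
  shows "(y \<longlongrightarrow> E) at_top"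
proof -
  have y01: "y 0 \<in> {0..1}" using y0 by auto
  have Epos: "E > 0" using apos b_pos by (simp add: E_def)
  define \<eta> where "\<eta> = min (y 0) E"
  have \<eta>pos: "\<eta> > 0" using y0 Epos by (simp add: \<eta>_def)
  define \<kappa> where "\<kappa> = 2*b*\<eta>/(2*bv+gv)"
  have \<kappa>pos: "\<kappa> > 0" using \<eta>pos b_pos pos by (simp add: \<kappa>_def add_pos_pos)
  define h where "h u = (y u - E)^2 * exp (\<kappa>*u)" for u
  have hd: "(h has_real_derivative (2*(y u - E)*F(y u)*exp(\<kappa>*u) + (y u - E)^2*(\<kappa>*exp(\<kappa>*u)))) (at u within {0..})"
    if "u \<ge> 0" for u
    unfolding h_def by (auto intro!: derivative_eq_intros yd[OF that] simp: algebra_simps)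
  have bound: "(y t - E)^2 \<le> exp (-\<kappa>*t)" if t: "t \<ge> 0" for t
  proof -
    have "h t \<le> h 0"
    proof (rule dec_lemma[OF hd])
      fix u assume u: "0 < u" "u < t"
      have yl: "y u \<ge> \<eta>" using lower[OF y0 apos] u unfolding \<eta>_def by auto
      have y2: "y u \<le> 2" using inv_facts(2)[OF y01] u by auto
      have Dp: "bv * y u + gv > 0" using yl \<eta>pos pos by (smt (verit) mult_nonneg_nonneg)
      have Dle: "bv * y u + gv \<le> 2*bv+gv" using y2 pos by simp
      have k: "\<kappa> \<le> 2*b*y u/(bv * y u + gv)"
        unfolding \<kappa>_def using Dp Dle b_pos \<eta>pos yl by (intro frac_le) auto
      define Q where "Q = 2*b*y u/(bv * y u + gv)"
      have "2*(y u - E)*F(y u) = - Q * (y u - E)^2"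
        using Dp unfolding Q_def by (simp add: F_eq gg_def power2_eq_square field_simps)
      hence eq: "2*(y u - E)*F(y u)*exp(\<kappa>*u) = - Q * (y u - E)^2 * exp(\<kappa>*u)" by simp
      have "2*(y u - E)*F(y u)*exp(\<kappa>*u) + (y u - E)^2*(\<kappa>*exp(\<kappa>*u))
          = (y u - E)^2 * (\<kappa> - Q) * exp(\<kappa>*u)"
        unfolding eq by (simp add: algebra_simps)
      also have "\<dots> = (y u - E)^2 * (\<kappa> - 2*b*y u/(bv * y u + gv)) * exp(\<kappa>*u)"
        by (simp add: Q_def)
      also have "\<dots> \<le> 0" using k by (intro mult_nonpos_nonneg mult_nonneg_nonpos) auto
      finally show "2*(y u - E)*F(y u)*exp(\<kappa>*u) + (y u - E)^2*(\<kappa>*exp(\<kappa>*u)) \<le> 0" .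
    qed (use t in auto)
    hence h1: "(y t - E)^2 * exp (\<kappa>*t) \<le> (y 0 - E)^2" by (simp add: h_def)
    have "(y 0 - E)^2 \<le> 1"
    proof -
      have "\<bar>y 0 - E\<bar> \<le> 1" using y0 Epos E_lt1 by auto
      hence "\<bar>y 0 - E\<bar>^2 \<le> 1^2" by (intro power_mono) auto
      thus ?thesis by simp
    qed
    with h1 have h2: "(y t - E)^2 * exp (\<kappa>*t) \<le> 1" by simp
    have e1: "exp (\<kappa>*t) * exp (-\<kappa>*t) = 1" by (simp flip: exp_add)
    have "(y t - E)^2 = ((y t - E)^2 * exp (\<kappa>*t)) * exp (-\<kappa>*t)"
      using e1 by (simp add: mult.assoc)
    also have "\<dots> \<le> 1 * exp (-\<kappa>*t)" by (rule mult_right_mono[OF h2]) simp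
    finally show ?thesis by simp
  qed
  have ev: "eventually (\<lambda>t. norm (y t - E) \<le> exp (-(\<kappa>/2)*t)) at_top"
    unfolding eventually_at_top_linorder
  proof (rule exI[of _ 0], intro allI impI)
    fix t :: real assume t: "t \<ge> 0"
    have sq: "(exp (-(\<kappa>/2)*t))^2 = exp (-\<kappa>*t)"
      by (simp add: power2_eq_square flip: exp_add)
    have "\<bar>y t - E\<bar>^2 \<le> (exp (-(\<kappa>/2)*t))^2"
      unfolding sq power2_abs using bound[OF t] .
    hence "\<bar>y t - E\<bar> \<le> exp (-(\<kappa>/2)*t)"
      by (rule power2_le_imp_le) simp
    thus "norm (y t - E) \<le> exp (-(\<kappa>/2)*t)" by simp
  qed
  have "((\<lambda>t. exp (-(\<kappa>/2)*t)) \<longlongrightarrow> 0) at_top" using \<kappa>pos by real_asymp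
  from Lim_null_comparison[OF ev this] have "((\<lambda>t. y t - E) \<longlongrightarrow> 0) at_top" .
  thus ?thesis by (rule LIM_zero_cancel)
qed

end

end
context sis begin

lemma escape:
  assumes apos: "a > 0" and x0: "0 < x0" "x0 \<le> E/2"
  shows "\<exists>z. ode_sol F z \<and> z 0 = x0 \<and> (\<exists>t>0. z t = 3*E/4)"
proof -
  have Epos: "E > 0" using apos b_pos by (simp add: E_def)
  define bp where "bp = bv + gv*b/a"
  have bppos: "bp > 0" using pos apos b_pos by (simp add: bp_def add_pos_pos)
  define G where "G x = gv/a * ln x - bp/b * ln (a - b*x)" for x
  define Gd where "Gd x = (bv*x+gv)/(x*(a-b*x))" for x
  define x1 where "x1 = x0/2"
  have x1: "0 < x1" "x1 < x0" using x0 by (auto simp: x1_def)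
  define I where "I = {x1<..<E}"
  have amb: "a - b*x > 0" if "x < E" for x
  proof -
    have "b*x < b*E" using that b_pos by simp
    thus ?thesis using bE by simp
  qed
  have Gder: "(G has_real_derivative Gd x) (at x)" if "0 < x" "x < E" for x
  proof -
    have m: "a - b*x > 0" using amb that by simp
    have "(G has_real_derivative (gv/a * (1/x) - bp/b * ((0 - b*1)/(a - b*x)))) (at x)"
      unfolding G_def using that m
      by (intro derivative_eq_intros refl) auto
    moreover have "gv/a * (1/x) - bp/b * ((0 - b*1)/(a - b*x)) = Gd x"
    proof -
      have "gv/a * (1/x) - bp/b * ((0 - b*1)/(a - b*x)) = gv/(a*x) + bp/(a - b*x)"
        using b_pos m by (simp add: field_simps)
      also have "\<dots> = (gv*(a - b*x) + bp*a*x)/(a*x*(a-b*x))"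
        using apos that m by (simp add: field_simps)
      also have "gv*(a - b*x) + bp*a*x = a*(bv*x+gv)"
        using apos by (simp add: bp_def field_simps)
      also have "a*(bv*x+gv)/(a*x*(a-b*x)) = Gd x"
        using apos by (simp add: Gd_def)
      finally show ?thesis .
    qed
    ultimately show ?thesis by simp
  qed
  have Gdpos: "Gd x > 0" if "0 < x" "x < E" for x
    using that amb[OF that(2)] pos unfolding Gd_def by (simp add: add_pos_pos)
  have FGd: "F x = inverse (Gd x)" if "0 < x" "x < E" for x
  proof -
    have m: "a - b*x > 0" using amb that by simp
    have D: "bv*x+gv > 0" using that pos by (simp add: add_pos_pos)
    have "F x = x * (a - b*x)/(bv*x+gv)"
      using D bE by (simp add: F_eq gg_def algebra_simps)
    thus ?thesis by (simp add: Gd_def)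
  qed
  have Gmono: "G u < G v" if "0 < u" "u < v" "v < E" for u v
    by (rule DERIV_pos_imp_increasing[OF that(2)]) (use that Gder Gdpos in force)
  have Gcont: "isCont G x" if "0 < x" "x < E" for x
    using Gder[OF that] by (rule DERIV_isCont)
  have inj: "inj_on G I"
  proof (rule inj_onI)
    fix u v assume "u \<in> I" "v \<in> I" "G u = G v"
    thus "u = v" using Gmono x1 unfolding I_def
      by (metis greaterThanLessThan_iff linorder_neqE_linordered_idom order_less_irrefl order.strict_trans)
  qed
  have unb: "\<exists>x. x0 \<le> x \<and> x < E \<and> G x \<ge> M" for M
  proof -
    define C where "C = gv/a * ln x0"
    define u where "u = min (a - b*x0) (exp (-(M - C)*b/bp))"
    have m0: "a - b*x0 > 0" using amb x0 Epos by simp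
    have upos: "u > 0" using m0 by (simp add: u_def)
    define x where "x = (a - u)/b"
    have bx: "b*x = a - u" using b_pos by (simp add: x_def)
    have "b*x0 \<le> b*x" using bx by (simp add: u_def)
    hence xx0: "x0 \<le> x" using b_pos by simp
    have "b*x < b*E" using bx bE upos by simp
    hence xE: "x < E" using b_pos by simp
    have amx: "a - b*x = u" using bx by simp
    have "ln x0 \<le> ln x" using xx0 x0 by simp
    hence c1: "C \<le> gv/a * ln x" unfolding C_def using pos apos by (intro mult_left_mono) auto
    have ue: "u \<le> exp (-(M - C)*b/bp)" by (simp add: u_def)
    have "ln u \<le> ln (exp (-(M - C)*b/bp))" using upos ue by (subst ln_le_cancel_iff) auto
    hence "ln u \<le> -(M - C)*b/bp" by simp
    hence "bp/b * ln u \<le> bp/b * (-(M - C)*b/bp)"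
      using bppos b_pos by (intro mult_left_mono) auto
    also have "\<dots> = C - M" using bppos b_pos by (simp add: field_simps)
    finally have c2: "bp/b * ln u \<le> C - M" .
    have "G x \<ge> M" unfolding G_def amx using c1 c2 by simp
    thus ?thesis using xx0 xE by blast
  qed
  have surj: "\<tau> \<in> G ` I" if \<tau>: "\<tau> > G x1" for \<tau>
  proof -
    obtain x2 where x2: "x0 \<le> x2" "x2 < E" "G x2 \<ge> \<tau>" using unb by blast
    have "continuous_on {x1..x2} G"
      by (rule continuous_at_imp_continuous_on) (use Gcont x1 x2 in auto)
    then obtain x where x: "x1 \<le> x" "x \<le> x2" "G x = \<tau>"
      using IVT'[of G x1 \<tau> x2] \<tau> x2 x1 by auto
    have "x \<noteq> x1" using x \<tau> by auto
    hence "x \<in> I" using x x2 unfolding I_def by auto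
    thus ?thesis using x by blast
  qed
  define \<phi> where "\<phi> = the_inv_into I G"
  have \<phi>I: "\<phi> \<tau> \<in> I" and G\<phi>: "G (\<phi> \<tau>) = \<tau>" if "\<tau> > G x1" for \<tau>
    using the_inv_into_into[OF inj surj[OF that] order_refl] f_the_inv_into_f[OF inj surj[OF that]]
    unfolding \<phi>_def by auto
  have \<phi>G: "\<phi> (G x) = x" if "x \<in> I" for x
    unfolding \<phi>_def using the_inv_into_f_f[OF inj that] .
  have \<phi>der: "(\<phi> has_real_derivative F (\<phi> \<tau>)) (at \<tau>)" if \<tau>: "\<tau> > G x1" for \<tau>
  proof -
    define p where "p = \<phi> \<tau>"
    have pI: "p \<in> I" using \<phi>I[OF \<tau>] by (simp add: p_def)
    have p: "x1 < p" "p < E" using pI unfolding I_def by auto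
    have "isCont \<phi> (G p)"
    proof (rule isCont_inverse_function2[of "(x1+p)/2" p "(p+E)/2"])
      show "(x1+p)/2 < p" "p < (p+E)/2" using p by auto
      fix z assume z: "(x1+p)/2 \<le> z" "z \<le> (p+E)/2"
      have zI: "z \<in> I" using z p unfolding I_def by auto
      show "\<phi> (G z) = z" using \<phi>G[OF zI] .
      show "isCont G z" using Gcont zI x1 unfolding I_def by auto
    qed
    hence cont: "isCont \<phi> \<tau>" using G\<phi>[OF \<tau>] by (simp add: p_def)
    have "(\<phi> has_real_derivative inverse (Gd (\<phi> \<tau>))) (at \<tau>)"
    proof (rule DERIV_inverse_function[where a="G x1" and b="\<tau>+1"])
      show "(G has_real_derivative Gd (\<phi> \<tau>)) (at (\<phi> \<tau>))" using Gder p x1 unfolding p_def by auto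
      have "0 < \<phi> \<tau>" using p x1 unfolding p_def by linarith
      thus "Gd (\<phi> \<tau>) \<noteq> 0" using Gdpos[of "\<phi> \<tau>"] p unfolding p_def by auto
      show "G x1 < \<tau>" "\<tau> < \<tau> + 1" using \<tau> by auto
      show "G (\<phi> y) = y" if "G x1 < y" "y < \<tau> + 1" for y using G\<phi> that by auto
      show "isCont \<phi> \<tau>" by (rule cont)
    qed
    moreover have "inverse (Gd (\<phi> \<tau>)) = F (\<phi> \<tau>)" using FGd p x1 unfolding p_def by auto
    ultimately show ?thesis by simp
  qed
  define z where "z t = \<phi> (t + G x0)" for t
  have x0I: "x0 \<in> I" using x0 x1 Epos unfolding I_def by auto
  have Gx1: "G x1 < G x0" using Gmono x1 x0 Epos by auto
  have "ode_sol F z"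
    unfolding ode_sol_def
  proof (intro allI impI)
    fix t :: real assume t: "t \<ge> 0"
    have "(\<phi> has_real_derivative F (\<phi> (t + G x0))) (at (t + G x0))"
      using \<phi>der Gx1 t by auto
    hence "(z has_real_derivative F (z t)) (at t)"
      unfolding z_def by (simp add: DERIV_shift)
    thus "(z has_real_derivative F (z t)) (at t within {0..})"
      by (rule has_field_derivative_at_within)
  qed
  moreover have "z 0 = x0" unfolding z_def using \<phi>G[OF x0I] by simp
  moreover have "\<exists>t>0. z t = 3*E/4"
  proof (intro exI conjI)
    have e3: "3*E/4 \<in> I" using Epos x1 x0 unfolding I_def by auto
    show "G (3*E/4) - G x0 > 0" using Gmono x0 Epos by auto
    show "z (G (3*E/4) - G x0) = 3*E/4" unfolding z_def using \<phi>G[OF e3] by simp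
  qed
  ultimately show ?thesis by blast
qed

end

theorem theorem4:
  fixes C0 \<beta>h \<gamma>h \<beta>v \<gamma>v :: real
  assumes "C0 > 0" "\<beta>h > 0" "\<gamma>h > 0" "\<beta>v > 0" "\<gamma>v > 0"
  defines "f \<equiv> (\<lambda>i::real. C0 * \<beta>h * \<beta>v * i * (1 - i) / (\<beta>v * i + \<gamma>v) - \<gamma>h * i)"
    and "R0 \<equiv> sqrt ((\<beta>h / \<gamma>v) * (C0 * \<beta>v / \<gamma>h))"
    and "Ef \<equiv> (0::real)"
    and "Ee \<equiv> (C0 * \<beta>h * \<beta>v - \<gamma>h * \<gamma>v) / (C0 * \<beta>h * \<beta>v + \<beta>v * \<gamma>h)"
  shows "(f Ef = 0 \<and> f Ee = 0 \<and> (\<forall>x. f x = 0 \<longrightarrow> x = Ef \<or> x = Ee))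
    \<and> (R0 \<le> 1 \<longrightarrow> glob_asym_stable f {0..1} Ef)
    \<and> (R0 < 1 \<longrightarrow> glob_exp_stable f {0..1} Ef)
    \<and> (R0 > 1 \<longrightarrow> unstable_eq f {0..1} Ef)
    \<and> (R0 > 1 \<longrightarrow> loc_asym_stable f {0..1} Ee \<and> glob_asym_stable f {0<..1} Ee)"
proof -
  interpret sis C0 \<beta>h \<gamma>h \<beta>v \<gamma>v using assms(1-5) by unfold_locales
  have fF: "f = F" unfolding f_def by (rule ext) (simp add: F_def)
  have EeE: "Ee = E" unfolding Ee_def E_def a_def b_def A_def by simp
  have q: "(\<beta>h / \<gamma>v) * (C0 * \<beta>v / \<gamma>h) = A/(\<gamma>h*\<gamma>v)"
    by (simp add: A_def field_simps)
  have gg0: "\<gamma>h*\<gamma>v > 0" using assms by simp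
  have R1: "R0 \<le> 1 \<longleftrightarrow> a \<le> 0" unfolding R0_def q a_def using gg0 by (simp add: pos_divide_le_eq)
  have R2: "R0 < 1 \<longleftrightarrow> a < 0" unfolding R0_def q a_def using gg0 by (simp add: pos_divide_less_eq)
  have R3: "R0 > 1 \<longleftrightarrow> a > 0" unfolding R0_def q a_def using gg0 by (simp add: pos_less_divide_eq)
  have part1: "F 0 = 0 \<and> F E = 0 \<and> (\<forall>x. F x = 0 \<longrightarrow> x = 0 \<or> x = E)"
    using equilibria by blast
  have part2: "glob_asym_stable F {0..1} 0" if a0: "a \<le> 0"
    unfolding glob_asym_stable_def
  proof (intro allI impI)
    fix y assume "ode_sol F y \<and> y 0 \<in> {0..1}"
    hence sol: "ode_sol F y" and y0: "y 0 \<in> {0..1}" by auto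
    define k where "k = b/(2*\<beta>v+\<gamma>v)"
    have kpos: "k > 0" using b_pos assms by (simp add: k_def add_pos_pos)
    have ev: "eventually (\<lambda>t. norm (y t) \<le> 1/(1 + k*t)) at_top"
      unfolding eventually_at_top_linorder
    proof (rule exI[of _ 0], intro allI impI)
      fix t :: real assume t: "t \<ge> 0"
      have "y t \<ge> 0" using inv_facts(1)[OF sol y0 t] .
      thus "norm (y t) \<le> 1/(1 + k*t)" using decay_weak[OF sol y0 a0 t] by (simp add: k_def)
    qed
    have "((\<lambda>t. 1/(1 + k*t)) \<longlongrightarrow> 0) at_top" using kpos by real_asymp
    thus "(y \<longlongrightarrow> 0) at_top" by (rule Lim_null_comparison[OF ev])
  qed
  have part3: "glob_exp_stable F {0..1} 0" if a0: "a < 0"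
    unfolding glob_exp_stable_def
  proof (intro conjI)
    show "glob_asym_stable F {0..1} 0" using part2 a0 by simp
    have dpos: "2*\<beta>v+\<gamma>v > 0" using assms by simp
    have kpos: "-a/(2*\<beta>v+\<gamma>v) > 0" using a0 dpos by (intro divide_pos_pos) auto
    have main: "\<forall>y. ode_sol F y \<and> y 0 \<in> {0..1} \<longrightarrow>
        (\<forall>t\<ge>0. \<bar>y t - 0\<bar> \<le> 1 * exp (- (-a/(2*\<beta>v+\<gamma>v)) * t))"
    proof (intro allI impI)
      fix y t assume yy: "ode_sol F y \<and> y 0 \<in> {0..1}" and t: "(0::real) \<le> t"
      hence sol: "ode_sol F y" and y0: "y 0 \<in> {0..1}" by auto
      have "y t \<ge> 0" using inv_facts(1)[OF sol y0 t] .
      thus "\<bar>y t - 0\<bar> \<le> 1 * exp (- (-a/(2*\<beta>v+\<gamma>v)) * t)"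
        using decay_exp[OF sol y0 a0 t] by simp
    qed
    show "\<exists>M>0. \<exists>\<kappa>>0. \<forall>y. ode_sol F y \<and> y 0 \<in> {0..1} \<longrightarrow>
        (\<forall>t\<ge>0. \<bar>y t - 0\<bar> \<le> M * exp (- \<kappa> * t))"
      using kpos main zero_less_one by blast
  qed
  have part4: "unstable_eq F {0..1} 0" if apos: "a > 0"
    unfolding unstable_eq_def stable_eq_def
  proof
    assume st: "\<forall>\<epsilon>>0. \<exists>\<delta>>0. \<forall>y. ode_sol F y \<and> y 0 \<in> {0..1} \<and> \<bar>y 0 - 0\<bar> < \<delta> \<longrightarrow>
        (\<forall>t>0. \<bar>y t - 0\<bar> < \<epsilon>)"
    have Epos: "E > 0" using apos b_pos by (simp add: E_def)
    obtain \<delta> where \<delta>: "\<delta> > 0" and H: "\<forall>y. ode_sol F y \<and> y 0 \<in> {0..1} \<and> \<bar>y 0 - 0\<bar> < \<delta> \<longrightarrow>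
        (\<forall>t>0. \<bar>y t - 0\<bar> < E/2)"
      using st Epos by (meson half_gt_zero)
    define x0 where "x0 = min (\<delta>/2) (E/2)"
    have x0: "0 < x0" "x0 \<le> E/2" "x0 < \<delta>" using \<delta> Epos by (auto simp: x0_def)
    obtain z where z: "ode_sol F z" "z 0 = x0" and tz: "\<exists>t>0. z t = 3*E/4"
      using escape[OF apos x0(1,2)] by blast
    have "z 0 \<in> {0..1}" using z x0 E_lt1 by auto
    hence all: "\<forall>t>0. \<bar>z t - 0\<bar> < E/2" using H z x0 by auto
    from tz obtain t where "t > 0" "z t = 3*E/4" by blast
    with all Epos show False by auto
  qed
  have part5: "loc_asym_stable F {0..1} E \<and> glob_asym_stable F {0<..1} E" if apos: "a > 0"
  proof
    have Epos: "E > 0" using apos b_pos by (simp add: E_def)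
    show g: "glob_asym_stable F {0<..1} E"
      unfolding glob_asym_stable_def using converge_E apos by blast
    show "loc_asym_stable F {0..1} E"
      unfolding loc_asym_stable_def
    proof (intro exI[of _ "E/2"] conjI allI impI)
      show "E/2 > 0" using Epos by simp
      fix y assume yy: "ode_sol F y \<and> y 0 \<in> {0..1} \<and> \<bar>y 0 - E\<bar> \<le> E/2"
      hence "- (y 0 - E) \<le> E/2" by (intro abs_le_D2) auto
      hence "y 0 \<in> {0<..1}" using Epos yy by auto
      thus "(y \<longlongrightarrow> E) at_top" using converge_E apos yy by blast
    qed
  qed
  show ?thesis
    unfolding fF EeE Ef_def R1 R2 R3
    using part1 part2 part3 part4 part5 by blast
qed

end
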